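(* Let $P\subset\mathbb{R}^d$ be a $(0,1)$-polytope. Then, after a change of coordinates, $P=P_1\times\cdots\times P_s$ for some indecomposable $(0,1)$-polytopes $P_1,\ldots,P_s$.
   Context: A $(0,1)$-polytope is a polytope all of whose vertices lie in $\{0,1\}^d$. A lattice polytope is (Minkowski) indecomposable if it is not a single point and whenever it equals $P_1+P_2$ (Minkowski sum) with $P_1,P_2$ lattice polytopes, one of $P_1,P_2$ is a single point. $\times$ denotes direct product of polytopes; a Minkowski sum $P'+Q'$ of polytopes in $\mathbb{R}^d$ such that, for every coordinate $i$, the projection of $P'$ or of $Q'$ to the $i$-th coordinate is $\{0\}$, is regarded as the direct product of these polytopes (in the respective coordinate subspaces). *)

theory Defs
  imports "HOL-Analysis.Analysis"
begin

text \<open>Polytopes in R^d, modelled as subsets of real^'n (d = CARD('n)).\<close>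

definition lattice_polytope :: "(real^'n) set \<Rightarrow> bool" where
  "lattice_polytope P \<longleftrightarrow> polytope P \<and> P \<noteq> {} \<and>
     (\<forall>v. v extreme_point_of P \<longrightarrow> (\<forall>i. v $ i \<in> \<int>))"

definition zero_one_polytope :: "(real^'n) set \<Rightarrow> bool" where
  "zero_one_polytope P \<longleftrightarrow> polytope P \<and> P \<noteq> {} \<and>
     (\<forall>v. v extreme_point_of P \<longrightarrow> (\<forall>i. v $ i \<in> {0, 1}))"

definition minkowski_sum :: "(real^'n) set \<Rightarrow> (real^'n) set \<Rightarrow> (real^'n) set" where
  "minkowski_sum A B = {x + y | x y. x \<in> A \<and> y \<in> B}"

definition is_single_point :: "(real^'n) set \<Rightarrow> bool" where
  "is_single_point A \<longleftrightarrow> (\<exists>a. A = {a})"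

definition lattice_indecomposable :: "(real^'n) set \<Rightarrow> bool" where
  "lattice_indecomposable P \<longleftrightarrow> \<not> is_single_point P \<and>
     (\<forall>P1 P2. lattice_polytope P1 \<and> lattice_polytope P2 \<and> P = minkowski_sum P1 P2
        \<longrightarrow> is_single_point P1 \<or> is_single_point P2)"

definition coord_zero :: "(real^'n) set \<Rightarrow> 'n \<Rightarrow> bool" where
  "coord_zero A i \<longleftrightarrow> (\<forall>x\<in>A. x $ i = 0)"

text \<open>Direct product of polytopes in complementary coordinate subspaces, realised as
  the Minkowski sum of factors with pairwise disjoint coordinate supports (empty product = {0}).\<close>
definition direct_product :: "(real^'n) set list \<Rightarrow> (real^'n) set" where
  "direct_product Ps = foldr minkowski_sum Ps {0}"

definition disjoint_supports :: "(real^'n) set list \<Rightarrow> bool" where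
  "disjoint_supports Ps \<longleftrightarrow> (\<forall>j<length Ps. \<forall>k<length Ps. j \<noteq> k \<longrightarrow>
      (\<forall>i. coord_zero (Ps ! j) i \<or> coord_zero (Ps ! k) i))"

end

theory Submission
  imports Defs
begin

definition var :: "(real^'n) set \<Rightarrow> 'n set" where
  "var A = {i. \<exists>x\<in>A. \<exists>y\<in>A. x$i \<noteq> y$i}"

definition prj :: "'n set \<Rightarrow> real^'n \<Rightarrow> real^'n" where
  "prj S x = (\<chi> i. if i \<in> S then x$i else 0)"

definition normd :: "(real^'n) set \<Rightarrow> bool" where
  "normd A \<longleftrightarrow> (\<forall>i. i \<notin> var A \<longrightarrow> coord_zero A i)"

lemma linear_prj: "linear (prj S)"
  by (rule linearI) (auto simp: prj_def vec_eq_iff)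

lemma convex_slab: "convex {x::real^'n. (a::real) \<le> x$i \<and> x$i \<le> b}"
proof -
  have "{x::real^'n. a \<le> x$i \<and> x$i \<le> b} = {x. axis i 1 \<bullet> x \<ge> a} \<inter> {x. axis i 1 \<bullet> x \<le> b}"
    by (auto simp: inner_axis')
  then show ?thesis by (simp add: convex_Int convex_halfspace_ge convex_halfspace_le)
qed

lemma polytope_KM: "polytope (A::(real^'n) set) \<Longrightarrow> A = convex hull {x. x extreme_point_of A}"
  by (simp add: Krein_Milman_Minkowski polytope_imp_compact polytope_imp_convex)

lemma hull_slab:
  fixes A :: "(real^'n) set" and a b :: real
  assumes "polytope A" "\<And>v. v extreme_point_of A \<Longrightarrow> a \<le> v$i \<and> v$i \<le> b" "x \<in> A"
  shows "a \<le> x$i \<and> x$i \<le> b"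
proof -
  have "convex hull {x. x extreme_point_of A} \<subseteq> {x::real^'n. a \<le> x$i \<and> x$i \<le> b}"
    by (rule hull_minimal) (use assms(2) convex_slab in auto)
  then show ?thesis using polytope_KM[OF assms(1)] assms(3) by blast
qed

lemma zo_range: "zero_one_polytope (A::(real^'n) set) \<Longrightarrow> x \<in> A \<Longrightarrow> 0 \<le> x$i \<and> x$i \<le> 1"
proof -
  assume a: "zero_one_polytope A" "x \<in> A"
  show ?thesis
  proof (rule hull_slab[where A=A])
    fix v assume "v extreme_point_of A"
    then have "v$i \<in> {0,1}" using a(1) by (auto simp: zero_one_polytope_def)
    then show "0 \<le> v$i \<and> v$i \<le> 1" by auto
  qed (use a in \<open>auto simp: zero_one_polytope_def\<close>)
qed

lemma lattice_range:
  fixes A :: "(real^'n) set"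
  assumes "lattice_polytope A" "i \<in> var A"
  shows "\<exists>y\<in>A. \<exists>y'\<in>A. y'$i \<ge> y$i + 1"
proof -
  have pA: "polytope A" and int: "\<And>v. v extreme_point_of A \<Longrightarrow> v$i \<in> \<int>"
    using assms(1) by (auto simp: lattice_polytope_def)
  obtain x y where xy: "x \<in> A" "y \<in> A" "x$i \<noteq> y$i" using assms(2) by (auto simp: var_def)
  have "\<exists>v w. v extreme_point_of A \<and> w extreme_point_of A \<and> v$i < w$i"
  proof (rule ccontr)
    assume "\<not> ?thesis"
    then have eq: "\<And>v w. v extreme_point_of A \<Longrightarrow> w extreme_point_of A \<Longrightarrow> v$i = w$i"
      by (meson linorder_neqE_linordered_idom)
    have "{x. x extreme_point_of A} \<noteq> {}" using polytope_KM[OF pA] xy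
      by (metis convex_hull_empty empty_iff)
    then obtain v where v: "v extreme_point_of A" by auto
    have "x$i = v$i \<and> y$i = v$i"
    proof -
      have "\<And>z. z \<in> A \<Longrightarrow> v$i \<le> z$i \<and> z$i \<le> v$i"
        by (rule hull_slab[OF pA]) (use eq[OF _ v] in auto)
      then show ?thesis using xy by (meson order_antisym)
    qed
    then show False using xy by simp
  qed
  then obtain v w where vw: "v extreme_point_of A" "w extreme_point_of A" "v$i < w$i" by blast
  have "w$i \<ge> v$i + 1"
  proof -
    obtain a where a: "v$i = of_int a" using int[OF vw(1)] by (auto elim: Ints_cases)
    obtain b where b: "w$i = of_int b" using int[OF vw(2)] by (auto elim: Ints_cases)
    show ?thesis using vw(3) unfolding a b by simp
  qed
  then show ?thesis using vw by (auto simp: extreme_point_of_def)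
qed


lemma msum_zero_right: "minkowski_sum A {0} = A"
  by (auto simp: minkowski_sum_def)

lemma msum_zero_left: "minkowski_sum {0} A = A"
  by (auto simp: minkowski_sum_def)

lemma msum_assoc: "minkowski_sum (minkowski_sum A B) C = minkowski_sum A (minkowski_sum B C)"
  unfolding minkowski_sum_def by (auto, metis add.assoc, metis add.assoc)

lemma dp_append: "direct_product (A @ B) = minkowski_sum (direct_product A) (direct_product B)"
  by (induction A) (auto simp: direct_product_def msum_zero_left msum_assoc)

lemma var_msum:
  assumes "A \<noteq> {}" "B \<noteq> {}"
  shows "var (minkowski_sum A B) = var A \<union> var B"
proof
  show "var (minkowski_sum A B) \<subseteq> var A \<union> var B"
  proof
    fix i assume "i \<in> var (minkowski_sum A B)"
    then obtain x x' where xx: "x \<in> minkowski_sum A B" "x' \<in> minkowski_sum A B" "x$i \<noteq> x'$i"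
      unfolding var_def by blast
    obtain y z where yz: "y \<in> A" "z \<in> B" "x = y + z" using xx(1) unfolding minkowski_sum_def by blast
    obtain y' z' where yz': "y' \<in> A" "z' \<in> B" "x' = y' + z'" using xx(2) unfolding minkowski_sum_def by blast
    have "y$i \<noteq> y'$i \<or> z$i \<noteq> z'$i" using xx(3) yz(3) yz'(3) by auto
    then show "i \<in> var A \<union> var B" using yz yz' unfolding var_def by blast
  qed
  show "var A \<union> var B \<subseteq> var (minkowski_sum A B)"
  proof
    fix i assume "i \<in> var A \<union> var B"
    then show "i \<in> var (minkowski_sum A B)"
    proof
      assume "i \<in> var A"
      then obtain x y where xy: "x \<in> A" "y \<in> A" "x$i \<noteq> y$i" unfolding var_def by blast
      obtain z where z: "z \<in> B" using assms by auto
      have "x + z \<in> minkowski_sum A B" "y + z \<in> minkowski_sum A B"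
        using xy z unfolding minkowski_sum_def by blast+
      moreover have "(x+z)$i \<noteq> (y+z)$i" using xy by simp
      ultimately show ?thesis unfolding var_def by blast
    next
      assume "i \<in> var B"
      then obtain x y where xy: "x \<in> B" "y \<in> B" "x$i \<noteq> y$i" unfolding var_def by blast
      obtain z where z: "z \<in> A" using assms by auto
      have "z + x \<in> minkowski_sum A B" "z + y \<in> minkowski_sum A B"
        using xy z unfolding minkowski_sum_def by blast+
      moreover have "(z+x)$i \<noteq> (z+y)$i" using xy by simp
      ultimately show ?thesis unfolding var_def by blast
    qed
  qed
qed

lemma var_disjoint:
  assumes "lattice_polytope A" "lattice_polytope B" "zero_one_polytope (minkowski_sum A B)"
  shows "var A \<inter> var B = {}"
proof (rule ccontr)
  assume "var A \<inter> var B \<noteq> {}"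
  then obtain i where i: "i \<in> var A" "i \<in> var B" by auto
  obtain y y' where y: "y \<in> A" "y' \<in> A" "y'$i \<ge> y$i + 1" using lattice_range[OF assms(1) i(1)] by auto
  obtain z z' where z: "z \<in> B" "z' \<in> B" "z'$i \<ge> z$i + 1" using lattice_range[OF assms(2) i(2)] by auto
  have "y + z \<in> minkowski_sum A B" "y' + z' \<in> minkowski_sum A B"
    using y z by (auto simp: minkowski_sum_def)
  from this[THEN zo_range[OF assms(3)], of i] show False using y z by simp
qed

lemma split_decomp:
  assumes P: "P = minkowski_sum P1 P2" and ne: "P1 \<noteq> {}" "P2 \<noteq> {}"
    and dis: "var P1 \<inter> var P2 = {}" and nP: "normd P"
  shows "P = minkowski_sum (prj (var P1) ` P) (prj (var P2) ` P)"
proof -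
  have vP: "var P = var P1 \<union> var P2" using var_msum[OF ne] P by simp
  have zero: "x$i = 0" if "x \<in> P" "i \<notin> var P1" "i \<notin> var P2" for x i
  proof -
    have "i \<notin> var P" using that vP by blast
    then show ?thesis using nP that(1) unfolding normd_def coord_zero_def by blast
  qed
  show ?thesis
  proof
    show "P \<subseteq> minkowski_sum (prj (var P1) ` P) (prj (var P2) ` P)"
    proof
      fix x assume x: "x \<in> P"
      have "x = prj (var P1) x + prj (var P2) x"
      proof (subst vec_eq_iff, intro allI)
        fix i show "x$i = (prj (var P1) x + prj (var P2) x)$i"
          using dis zero[OF x, of i] by (cases "i \<in> var P1"; cases "i \<in> var P2") (auto simp: prj_def)
      qed
      then show "x \<in> minkowski_sum (prj (var P1) ` P) (prj (var P2) ` P)"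
        using x unfolding minkowski_sum_def by blast
    qed
  next
    show "minkowski_sum (prj (var P1) ` P) (prj (var P2) ` P) \<subseteq> P"
    proof
      fix w assume "w \<in> minkowski_sum (prj (var P1) ` P) (prj (var P2) ` P)"
      then obtain x x' where xx: "x \<in> P" "x' \<in> P" "w = prj (var P1) x + prj (var P2) x'"
        unfolding minkowski_sum_def by blast
      obtain y z where yz: "y \<in> P1" "z \<in> P2" "x = y + z" using xx(1) P unfolding minkowski_sum_def by blast
      obtain y' z' where yz': "y' \<in> P1" "z' \<in> P2" "x' = y' + z'" using xx(2) P unfolding minkowski_sum_def by blast
      have yz'P: "y + z' \<in> P" using yz yz' P unfolding minkowski_sum_def by blast
      have "w = y + z'"
      proof (subst vec_eq_iff, intro allI)
        fix i
        show "w$i = (y + z')$i"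
        proof (cases "i \<in> var P1")
          case True
          then have n2: "i \<notin> var P2" using dis by auto
          then have "z$i = z'$i" using yz(2) yz'(2) unfolding var_def by blast
          then show ?thesis using True n2 xx(3) yz by (simp add: prj_def)
        next
          case F1: False
          show ?thesis
          proof (cases "i \<in> var P2")
            case True
            have "y$i = y'$i" using yz(1) yz'(1) F1 unfolding var_def by blast
            then show ?thesis using True F1 xx(3) yz' by (simp add: prj_def)
          next
            case False
            then show ?thesis using zero[OF yz'P F1 False] F1 xx(3) by (simp add: prj_def)
          qed
        qed
      qed
      then show "w \<in> P" using yz'P by simp
    qed
  qed
qed

lemma zo_prj:
  assumes "zero_one_polytope P"
  shows "zero_one_polytope (prj S ` P)"
proof -
  have pP: "polytope P" "P \<noteq> {}" and zo: "\<And>v i. v extreme_point_of P \<Longrightarrow> v $ i \<in> {0,1}"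
    using assms by (auto simp: zero_one_polytope_def)
  have "prj S ` P = convex hull (prj S ` {x. x extreme_point_of P})"
    using polytope_KM[OF pP(1)] convex_hull_linear_image[OF linear_prj] by metis
  then have ext: "{v. v extreme_point_of (prj S ` P)} \<subseteq> prj S ` {x. x extreme_point_of P}"
    using extreme_points_of_convex_hull by metis
  have "v $ i \<in> {0,1}" if v: "v extreme_point_of (prj S ` P)" for v i
  proof -
    obtain e where "e extreme_point_of P" "v = prj S e" using ext v by blast
    then show ?thesis using zo[of e i] by (auto simp: prj_def)
  qed
  then show ?thesis using pP polytope_linear_image[OF linear_prj pP(1)]
    by (auto simp: zero_one_polytope_def)
qed

lemma var_prj: "var (prj S ` P) \<subseteq> S \<inter> var P"
  by (auto simp: var_def prj_def)

lemma normd_prj: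
  assumes "S \<subseteq> var P"
  shows "normd (prj S ` P)"
  unfolding normd_def coord_zero_def
proof (intro allI impI ballI)
  fix i x assume i: "i \<notin> var (prj S ` P)" and x: "x \<in> prj S ` P"
  show "x $ i = 0"
  proof (cases "i \<in> S")
    case True
    then obtain y z where "y \<in> P" "z \<in> P" "y$i \<noteq> z$i" using assms by (auto simp: var_def)
    then have "prj S y \<in> prj S ` P" "prj S z \<in> prj S ` P" "(prj S y)$i \<noteq> (prj S z)$i"
      using True by (auto simp: prj_def)
    then have "i \<in> var (prj S ` P)" unfolding var_def by blast
    then show ?thesis using i by simp
  qed (use x in \<open>auto simp: prj_def\<close>)
qed


lemma ds_append:
  assumes "disjoint_supports A" "disjoint_supports B"
    and cross: "\<And>Q Q' i. Q \<in> set A \<Longrightarrow> Q' \<in> set B \<Longrightarrow> coord_zero Q i \<or> coord_zero Q' i"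
  shows "disjoint_supports (A @ B)"
  unfolding disjoint_supports_def
proof (intro allI impI)
  fix j k i assume jk: "j < length (A @ B)" "k < length (A @ B)" "j \<noteq> k"
  show "coord_zero ((A @ B) ! j) i \<or> coord_zero ((A @ B) ! k) i"
  proof (cases "j < length A")
    case jA: True
    show ?thesis
    proof (cases "k < length A")
      case True
      then show ?thesis using jA jk assms(1) by (simp add: nth_append disjoint_supports_def)
    next
      case False
      then have "B ! (k - length A) \<in> set B" using jk by auto
      moreover have "A ! j \<in> set A" using jA by auto
      ultimately show ?thesis using jA False cross by (simp add: nth_append)
    qed
  next
    case jA: False
    show ?thesis
    proof (cases "k < length A")
      case True
      then have k1: "A ! k \<in> set A" by auto
      have j1: "B ! (j - length A) \<in> set B" using jk jA by auto
      show ?thesis using jA True cross[OF k1 j1, of i] by (auto simp: nth_append)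
    next
      case False
      have "j - length A < length B" "k - length A < length B" "j - length A \<noteq> k - length A"
        using jk jA False by auto
      then show ?thesis using jA False assms(2) by (simp add: nth_append disjoint_supports_def)
    qed
  qed
qed

lemma main:
  fixes P :: "(real^'n) set"
  shows "zero_one_polytope P \<Longrightarrow> normd P \<Longrightarrow> \<exists>Ps. (\<forall>Q\<in>set Ps. zero_one_polytope Q \<and>
     lattice_indecomposable Q \<and> normd Q \<and> var Q \<subseteq> var P) \<and> disjoint_supports Ps \<and> P = direct_product Ps"
proof (induction "card (var P)" arbitrary: P rule: less_induct)
  case less
  show ?case
  proof (cases "is_single_point P")
    case True
    then obtain a where a: "P = {a}" by (auto simp: is_single_point_def)
    have "a = 0"
    proof (subst vec_eq_iff, intro allI)
      fix i
      have "i \<notin> var P" using a by (auto simp: var_def)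
      then show "a $ i = 0 $ i" using less.prems(2) a by (auto simp: normd_def coord_zero_def)
    qed
    then have "P = direct_product []" using a by (simp add: direct_product_def)
    then show ?thesis by (intro exI[of _ "[]"]) (simp add: disjoint_supports_def)
  next
    case ns: False
    show ?thesis
    proof (cases "lattice_indecomposable P")
      case True
      have "P = direct_product [P]" by (simp add: direct_product_def msum_zero_right)
      moreover have "disjoint_supports [P]" by (auto simp: disjoint_supports_def)
      ultimately show ?thesis using True less.prems by (intro exI[of _ "[P]"]) auto
    next
      case False
      then obtain P1 P2 where PP: "lattice_polytope P1" "lattice_polytope P2" "P = minkowski_sum P1 P2"
        "\<not> is_single_point P1" "\<not> is_single_point P2"
        using ns unfolding lattice_indecomposable_def by blast
      have ne: "P1 \<noteq> {}" "P2 \<noteq> {}" using PP by (auto simp: lattice_polytope_def)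
      have dis: "var P1 \<inter> var P2 = {}" using var_disjoint[OF PP(1,2)] PP(3) less.prems(1) by simp
      have vP: "var P = var P1 \<union> var P2" using var_msum[OF ne] PP(3) by simp
      have v2: "var P2 \<noteq> {}"
      proof -
        obtain x where x: "x \<in> P2" using ne by auto
        then obtain y where y: "y \<in> P2" "y \<noteq> x" using PP(5) unfolding is_single_point_def by blast
        then obtain i where "x$i \<noteq> y$i" by (metis vec_eq_iff)
        then show ?thesis using x y unfolding var_def by blast
      qed
      have v1: "var P1 \<noteq> {}"
      proof -
        obtain x where x: "x \<in> P1" using ne by auto
        then obtain y where y: "y \<in> P1" "y \<noteq> x" using PP(4) unfolding is_single_point_def by blast
        then obtain i where "x$i \<noteq> y$i" by (metis vec_eq_iff)
        then show ?thesis using x y unfolding var_def by blast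
      qed
      define Q1 where "Q1 = prj (var P1) ` P"
      define Q2 where "Q2 = prj (var P2) ` P"
      have Peq: "P = minkowski_sum Q1 Q2"
        unfolding Q1_def Q2_def by (rule split_decomp[OF PP(3) ne dis less.prems(2)])
      have zo1: "zero_one_polytope Q1" "normd Q1" "var Q1 \<subseteq> var P1"
        unfolding Q1_def using zo_prj[OF less.prems(1)] normd_prj[of "var P1" P] var_prj[of "var P1" P] vP
        by auto
      have zo2: "zero_one_polytope Q2" "normd Q2" "var Q2 \<subseteq> var P2"
        unfolding Q2_def using zo_prj[OF less.prems(1)] normd_prj[of "var P2" P] var_prj[of "var P2" P] vP
        by auto
      have c1: "card (var Q1) < card (var P)"
      proof -
        have "var Q1 \<subset> var P" using zo1(3) vP dis v2 by blast
        then show ?thesis by (simp add: psubset_card_mono)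
      qed
      have c2: "card (var Q2) < card (var P)"
      proof -
        have "var Q2 \<subset> var P" using zo2(3) vP dis v1 by blast
        then show ?thesis by (simp add: psubset_card_mono)
      qed
      obtain Ps1 where Ps1: "\<forall>Q\<in>set Ps1. zero_one_polytope Q \<and> lattice_indecomposable Q \<and> normd Q \<and> var Q \<subseteq> var Q1"
        "disjoint_supports Ps1" "Q1 = direct_product Ps1"
        using less.hyps[OF c1 zo1(1,2)] by blast
      obtain Ps2 where Ps2: "\<forall>Q\<in>set Ps2. zero_one_polytope Q \<and> lattice_indecomposable Q \<and> normd Q \<and> var Q \<subseteq> var Q2"
        "disjoint_supports Ps2" "Q2 = direct_product Ps2"
        using less.hyps[OF c2 zo2(1,2)] by blast
      have cross: "coord_zero Q i \<or> coord_zero Q' i" if "Q \<in> set Ps1" "Q' \<in> set Ps2" for Q Q' i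
      proof (cases "i \<in> var Q")
        case True
        then have "i \<in> var P1" using Ps1(1) that(1) zo1(3) by blast
        then have "i \<notin> var Q'" using Ps2(1) that(2) zo2(3) dis by blast
        then show ?thesis using Ps2(1) that(2) unfolding normd_def by blast
      next
        case False
        then show ?thesis using Ps1(1) that(1) unfolding normd_def by blast
      qed
      have "disjoint_supports (Ps1 @ Ps2)" by (rule ds_append[OF Ps1(2) Ps2(2) cross])
      moreover have "P = direct_product (Ps1 @ Ps2)" using Peq Ps1(3) Ps2(3) by (simp add: dp_append)
      moreover have "\<forall>Q\<in>set (Ps1 @ Ps2). zero_one_polytope Q \<and> lattice_indecomposable Q \<and> normd Q \<and> var Q \<subseteq> var P"
        using Ps1(1) Ps2(1) zo1(3) zo2(3) vP by fastforce
      ultimately show ?thesis by blast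
    qed
  qed
qed

theorem lemma4p1:
  fixes P :: "(real^'n) set"
  assumes "zero_one_polytope P"
  shows "\<exists>(t :: real^'n) (Ps :: (real^'n) set list).
           (\<forall>i. t $ i \<in> \<int>) \<and>
           (\<forall>Q \<in> set Ps. zero_one_polytope Q \<and> lattice_indecomposable Q) \<and>
           disjoint_supports Ps \<and>
           P = (\<lambda>x. t + x) ` direct_product Ps"
proof -
  have pP: "polytope P" "P \<noteq> {}" using assms by (auto simp: zero_one_polytope_def)
  have "{x. x extreme_point_of P} \<noteq> {}" using polytope_KM[OF pP(1)] pP(2)
    by (metis convex_hull_empty)
  then obtain p where p: "p extreme_point_of P" by auto
  have pin: "p \<in> P" using p by (auto simp: extreme_point_of_def)
  have p01: "p $ i \<in> {0,1}" for i using p assms by (auto simp: zero_one_polytope_def)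
  define S where "S = var P"
  define t where "t = prj (- S) p"
  have tint: "\<forall>i. t $ i \<in> \<int>"
  proof
    fix i show "t $ i \<in> \<int>" using p01[of i] by (auto simp: t_def prj_def)
  qed
  have id: "t + prj S x = x" if x: "x \<in> P" for x
  proof (subst vec_eq_iff, intro allI)
    fix i show "(t + prj S x) $ i = x $ i"
    proof (cases "i \<in> S")
      case False
      then have "x $ i = p $ i" using x pin unfolding S_def var_def by blast
      then show ?thesis using False by (simp add: t_def prj_def)
    qed (simp add: t_def prj_def)
  qed
  have "P = (\<lambda>x. t + prj S x) ` P" using id by (simp add: image_cong)
  also have "\<dots> = (\<lambda>x. t + x) ` (prj S ` P)" by (simp add: image_image)
  finally have Peq: "P = (\<lambda>x. t + x) ` (prj S ` P)" .
  obtain Ps where Ps: "\<forall>Q\<in>set Ps. zero_one_polytope Q \<and> lattice_indecomposable Q \<and> normd Q \<and> var Q \<subseteq> var (prj S ` P)"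
    "disjoint_supports Ps" "prj S ` P = direct_product Ps"
    using main[OF zo_prj[OF assms] normd_prj] S_def by blast
  show ?thesis using tint Ps Peq by metis
qed

end
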